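(* Let $k$ be an infinite field with $\operatorname{char}k\neq 2$, let $a\in k\setminus k^2$, let $b_1,\dots,b_n\in k\setminus\{0\}$, and let $L_0=k(s_i,t_i:1\le i\le n)$ be a field extension of $k$ with $\operatorname{trdeg}_k(L_0)=n$ satisfying $s_i^2-at_i^2=b_i$ for $1\le i\le n$. Then $L_0$ is $k$-rational (respectively, stably $k$-rational, $k$-unirational) if and only if $(a,b_i)_{2,k}=0$ for all $1\le i\le n$.
   Context: A finitely generated field extension $L/k$ is $k$-rational if it is purely transcendental over $k$; stably $k$-rational if $L(y_1,\dots,y_m)$ is $k$-rational for some $y_1,\dots,y_m$ algebraically independent over $L$; $k$-unirational if $L$ is $k$-isomorphic to a subfield of a $k$-rational field. $(u,v)_{2,k}$ is the class in $\mathrm{Br}(k)$ of the quaternion algebra generated over $k$ by $U,V$ with $U^2=u$, $V^2=v$, $UV=-VU$; it is $0$ iff there exist $x,y\in k$ with $ux^2+vy^2=1$. *)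

theory Defs
  imports Main "HOL-Library.Poly_Mapping" "HOL-Computational_Algebra.Fraction_Field"
    "HOL-Computational_Algebra.Polynomial"
begin

definition is_subfield :: "'K::field set \<Rightarrow> bool" where
  "is_subfield F \<longleftrightarrow> 0 \<in> F \<and> 1 \<in> F \<and>
     (\<forall>x\<in>F. \<forall>y\<in>F. x + y \<in> F \<and> x - y \<in> F \<and> x * y \<in> F) \<and>
     (\<forall>x\<in>F. inverse x \<in> F)"

text \<open>The subfield generated by a set S (the smallest subfield containing S);
  k(S) is written gen_field (k \<union> S).\<close>
definition gen_field :: "'K::field set \<Rightarrow> 'K set" where
  "gen_field S = \<Inter>{F. is_subfield F \<and> S \<subseteq> F}"

text \<open>A monomial is an exponent function e with finite support contained in B.\<close>
definition alg_indep :: "'K::field set \<Rightarrow> 'K set \<Rightarrow> bool" where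
  "alg_indep F B \<longleftrightarrow>
     (\<forall>(E :: ('K \<Rightarrow> nat) set) (c :: ('K \<Rightarrow> nat) \<Rightarrow> 'K).
        finite E \<longrightarrow>
        (\<forall>e\<in>E. finite {x. e x \<noteq> 0} \<and> {x. e x \<noteq> 0} \<subseteq> B \<and> c e \<in> F) \<longrightarrow>
        (\<Sum>e\<in>E. c e * (\<Prod>x\<in>{x. e x \<noteq> 0}. x ^ e x)) = 0 \<longrightarrow>
        (\<forall>e\<in>E. c e = 0))"

definition algebraic_over :: "'K::field set \<Rightarrow> 'K \<Rightarrow> bool" where
  "algebraic_over F x \<longleftrightarrow> (\<exists>p. p \<noteq> 0 \<and> (\<forall>i. coeff p i \<in> F) \<and> poly p x = 0)"

definition has_trdeg :: "'K::field set \<Rightarrow> 'K set \<Rightarrow> nat \<Rightarrow> bool" where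
  "has_trdeg k L n \<longleftrightarrow> (\<exists>B. B \<subseteq> L \<and> finite B \<and> card B = n \<and> alg_indep k B \<and>
       (\<forall>x\<in>L. algebraic_over (gen_field (k \<union> B)) x))"

definition k_rational :: "'K::field set \<Rightarrow> 'K set \<Rightarrow> bool" where
  "k_rational k L \<longleftrightarrow> (\<exists>B. finite B \<and> alg_indep k B \<and> L = gen_field (k \<union> B))"

text \<open>A canonical big field over 'K: the fraction field of the polynomial ring over 'K
  in countably many indeterminates X_0, X_1, ...  It contains a copy of every
  field L(y_1,...,y_m) (L a subfield of 'K, y_i independent indeterminates) and of
  every finitely generated purely transcendental extension of a subfield k of 'K.\<close>
type_synonym 'K bigfield = "((nat \<Rightarrow>\<^sub>0 nat) \<Rightarrow>\<^sub>0 'K) fract"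

definition bconst :: "'K::field \<Rightarrow> 'K bigfield" where
  "bconst c = Fraction_Field.Fract (Poly_Mapping.single 0 c) 1"

definition stably_k_rational :: "'K::field set \<Rightarrow> 'K set \<Rightarrow> bool" where
  "stably_k_rational k L \<longleftrightarrow>
     (\<exists>Y :: 'K bigfield set. finite Y \<and> alg_indep (bconst ` L) Y \<and>
        k_rational (bconst ` k) (gen_field (bconst ` L \<union> Y)))"

definition k_unirational :: "'K::field set \<Rightarrow> 'K set \<Rightarrow> bool" where
  "k_unirational k L \<longleftrightarrow>
     (\<exists>(R :: 'K bigfield set) (f :: 'K \<Rightarrow> 'K bigfield).
        k_rational (bconst ` k) R \<and> inj_on f L \<and> f ` L \<subseteq> R \<and>
        (\<forall>x\<in>L. \<forall>y\<in>L. f (x + y) = f x + f y \<and> f (x * y) = f x * f y) \<and>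
        (\<forall>c\<in>k. f c = bconst c))"

text \<open>(u,v)_{2,k} = 0 in Br(k), via the characterization given in the paper's context:
  there are x, y in k with u x^2 + v y^2 = 1.\<close>
definition quat_class_zero :: "'K::field set \<Rightarrow> 'K \<Rightarrow> 'K \<Rightarrow> bool" where
  "quat_class_zero k u v \<longleftrightarrow> (\<exists>x\<in>k. \<exists>y\<in>k. u * x^2 + v * y^2 = 1)"

end

theory Submission
  imports Defs "HOL-Algebra.Finite_Extensions"
begin
hide_const (open) Polynomials.degree Polynomials.lead_coeff up_ring.coeff up_ring.monom

lemma sf_0: "is_subfield F \<Longrightarrow> 0 \<in> F" and sf_1: "is_subfield F \<Longrightarrow> 1 \<in> F"
  and sf_add: "is_subfield F \<Longrightarrow> x \<in> F \<Longrightarrow> y \<in> F \<Longrightarrow> x + y \<in> F"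
  and sf_diff: "is_subfield F \<Longrightarrow> x \<in> F \<Longrightarrow> y \<in> F \<Longrightarrow> x - y \<in> F"
  and sf_mult: "is_subfield F \<Longrightarrow> x \<in> F \<Longrightarrow> y \<in> F \<Longrightarrow> x * y \<in> F"
  and sf_inv: "is_subfield F \<Longrightarrow> x \<in> F \<Longrightarrow> inverse x \<in> F"
  unfolding is_subfield_def by auto

lemma sf_uminus: "is_subfield F \<Longrightarrow> x \<in> F \<Longrightarrow> - x \<in> F"
  using sf_diff[of F 0 x] sf_0 by auto

lemma sf_divide: "is_subfield F \<Longrightarrow> x \<in> F \<Longrightarrow> y \<in> F \<Longrightarrow> x / y \<in> F"
  by (simp add: divide_inverse sf_mult sf_inv)

lemma sf_power: "is_subfield F \<Longrightarrow> x \<in> F \<Longrightarrow> x ^ n \<in> F"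
  by (induct n) (auto intro: sf_1 sf_mult)

lemma sf_sum: "is_subfield F \<Longrightarrow> (\<And>i. i \<in> I \<Longrightarrow> f i \<in> F) \<Longrightarrow> sum f I \<in> F"
  by (induct I rule: infinite_finite_induct) (auto intro: sf_0 sf_add)

lemma sf_prod: "is_subfield F \<Longrightarrow> (\<And>i. i \<in> I \<Longrightarrow> f i \<in> F) \<Longrightarrow> prod f I \<in> F"
  by (induct I rule: infinite_finite_induct) (auto intro: sf_1 sf_mult)

lemma sf_of_nat: "is_subfield F \<Longrightarrow> of_nat n \<in> F"
  by (induct n) (auto intro: sf_0 sf_1 sf_add)

lemma sf_UNIV: "is_subfield UNIV" unfolding is_subfield_def by auto

lemma gen_field_sf: "is_subfield (gen_field S)"
  unfolding gen_field_def is_subfield_def by auto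

lemma gen_field_incl: "S \<subseteq> gen_field S"
  unfolding gen_field_def by auto

lemma gen_field_least: "is_subfield F \<Longrightarrow> S \<subseteq> F \<Longrightarrow> gen_field S \<subseteq> F"
  unfolding gen_field_def by auto

lemma gen_field_mono: "S \<subseteq> T \<Longrightarrow> gen_field S \<subseteq> gen_field T"
  by (meson gen_field_incl gen_field_least gen_field_sf order_trans)

lemma gen_field_idem: "is_subfield F \<Longrightarrow> gen_field F = F"
  by (simp add: gen_field_incl gen_field_least subset_antisym)

lemma gen_field_assoc: "gen_field (gen_field A \<union> C) = gen_field (A \<union> C)"
proof
  show "gen_field (gen_field A \<union> C) \<subseteq> gen_field (A \<union> C)"
    by (intro gen_field_least gen_field_sf)
       (metis Un_least Un_upper1 Un_upper2 gen_field_incl gen_field_mono order_trans)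
  show "gen_field (A \<union> C) \<subseteq> gen_field (gen_field A \<union> C)"
    by (intro gen_field_mono) (use gen_field_incl in blast)
qed

lemma algebraic_mono: "F \<subseteq> G \<Longrightarrow> algebraic_over F x \<Longrightarrow> algebraic_over G x"
  unfolding algebraic_over_def by blast

lemma algebraic_self: "0 \<in> F \<Longrightarrow> 1 \<in> F \<Longrightarrow> - x \<in> F \<Longrightarrow> algebraic_over F x"
  unfolding algebraic_over_def
  by (rule exI[of _ "[:-x, 1:]"]) (auto simp: coeff_pCons split: nat.splits)

lemma algebraic_in_sf: "is_subfield F \<Longrightarrow> x \<in> F \<Longrightarrow> algebraic_over F x"
  by (intro algebraic_self sf_0 sf_1 sf_uminus)

definition R0 :: "'a::field ring" where
  "R0 = \<lparr> carrier = UNIV, monoid.mult = (\<lambda>x y. x * y), one = 1, ring.zero = 0, add = (\<lambda> x y. x + y) \<rparr>"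

lemma R0_simps [simp]: "carrier R0 = UNIV" "monoid.mult R0 = (*)" "one R0 = 1" "zero R0 = 0"
  "add R0 = (+)"
  by (simp_all add: R0_def)

lemma field_R0: "field (R0 :: 'a::field ring)"
proof -
  have "\<exists>y. x + y = 0" for x :: 'a
    using add.right_inverse by blast
  moreover have "x \<noteq> 0 \<Longrightarrow> \<exists>y. x * y = 1" for x :: 'a
    by (rule exI[of _ "inverse x"]) auto
  ultimately show ?thesis
    unfolding R0_def using add.right_inverse
    by unfold_locales (auto simp:algebra_simps Units_def)
qed

lemma domain_R0: "domain (R0 :: 'a::field ring)" using field_R0 field.axioms(1) by blast
lemma cring_R0: "cring (R0 :: 'a::field ring)" using domain_R0 domain_def by blast
lemma ring_R0: "ring (R0 :: 'a::field ring)" using cring_R0 cring_def by blast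

lemma R0_pow [simp]: "x [^]\<^bsub>R0\<^esub> (n::nat) = x ^ n"
  by (induct n) (simp_all add: mult.commute)

lemma R0_inv [simp]: "x \<noteq> (0::'a::field) \<Longrightarrow> inv\<^bsub>R0\<^esub> x = inverse x"
  by (rule monoid.inv_char[OF ring.is_monoid[OF ring_R0]]) auto

lemma R0_uminus [simp]: "\<ominus>\<^bsub>R0\<^esub> (x::'a::field) = - x"
  by (rule abelian_group.minus_equality[OF ring.is_abelian_group[OF ring_R0]]) auto

lemma subfield_R0_iff: "subfield K (R0 :: 'a::field ring) \<longleftrightarrow> is_subfield K"
proof
  assume A: "subfield K R0"
  have sr: "subring K R0" using subfieldE(1)[OF A] .
  have inv: "inverse x \<in> K" if "x \<in> K" for x
  proof (cases "x = 0")
    case True thus ?thesis using subringE(2)[OF sr] by simp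
  next
    case False
    then have "inv\<^bsub>R0\<^esub> x \<in> K" using A that ring.subfield_m_inv(1)[OF ring_R0] by fastforce
    thus ?thesis using False by simp
  qed
  have z: "0 \<in> K" "1 \<in> K" using subringE(2,3)[OF sr] by simp_all
  have m: "- x \<in> K" if "x \<in> K" for x using subringE(5)[OF sr that] by simp
  have ad: "x + y \<in> K" if "x \<in> K" "y \<in> K" for x y using subringE(7)[OF sr that] by simp
  have mu: "x * y \<in> K" if "x \<in> K" "y \<in> K" for x y using subringE(6)[OF sr that] by simp
  have di: "x - y \<in> K" if "x \<in> K" "y \<in> K" for x y
    using ad[OF that(1) m[OF that(2)]] by simp
  show "is_subfield K" unfolding is_subfield_def
    by (intro conjI ballI z ad mu di inv) assumption+
next
  assume F: "is_subfield K"
  show "subfield K R0"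
  proof (rule field.subfieldI'[OF field_R0])
    show "subring K R0"
      by (rule ring.subringI[OF ring_R0]) (auto intro: sf_1 sf_uminus sf_mult sf_add F)
    show "inv\<^bsub>R0\<^esub> k \<in> K" if "k \<in> K - {\<zero>\<^bsub>R0\<^esub>}" for k
      using that sf_inv[OF F] by auto
  qed
qed

lemma poly_Poly_snoc: "poly (Poly (xs @ [a::'a::comm_ring_1])) x = poly (Poly xs) x + a * x ^ length xs"
  by (induct xs) (auto simp: algebra_simps)

lemma eval_R0: "ring.eval R0 l x = poly (Poly (rev l)) x"
proof (induct l)
  case Nil
  then show ?case by (simp add: ring.eval.simps[OF ring_R0])
next
  case (Cons a l)
  then show ?case by (simp add: ring.eval.simps[OF ring_R0] poly_Poly_snoc add.commute)
qed

lemma algebraic_bridge: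
  assumes "is_subfield K"
  shows "algebraic_over K x \<longleftrightarrow> (ring.algebraic R0 over K) x"
proof
  have sr: "subring K R0" using assms subfield_R0_iff subfieldE(1) by blast
  assume "algebraic_over K x"
  then obtain p where p: "p \<noteq> 0" "\<forall>i. coeff p i \<in> K" "poly p x = 0"
    unfolding algebraic_over_def by blast
  let ?l = "rev (coeffs p)"
  have "?l \<in> carrier (K[X]\<^bsub>R0\<^esub>)"
    using p unfolding univ_poly_def polynomial_def
    by (auto simp: hd_rev last_coeffs_eq_coeff_degree coeffs_def)
  moreover have "?l \<noteq> []" using p by simp
  moreover have "ring.eval R0 ?l x = \<zero>\<^bsub>R0\<^esub>" using p by (simp add: eval_R0)
  ultimately show "(ring.algebraic R0 over K) x"
    using ring.algebraicI[OF ring_R0] unfolding over_def by blast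
next
  have sr: "subring K R0" using assms subfield_R0_iff subfieldE(1) by blast
  assume "(ring.algebraic R0 over K) x"
  then obtain l where l: "l \<in> carrier (K[X]\<^bsub>R0\<^esub>)" "l \<noteq> []" "ring.eval R0 l x = \<zero>\<^bsub>R0\<^esub>"
    using domain.algebraicE[OF domain_R0 sr] unfolding over_def by auto
  have hd: "hd l \<noteq> 0" "set l \<subseteq> K" using l(1,2) unfolding univ_poly_def polynomial_def by auto
  let ?p = "Poly (rev l)"
  have "coeff ?p (length l - 1) = hd l"
    using l(2) by (simp add: nth_default_def rev_nth hd_conv_nth)
  then have "?p \<noteq> 0" using hd(1) by (intro notI) simp
  moreover have "\<forall>i. coeff ?p i \<in> K"
  proof
    fix i
    have "rev l ! i \<in> K" if "i < length l"
      using that hd(2) nth_mem[of i "rev l"] by auto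
    then show "coeff ?p i \<in> K" using sf_0[OF assms] by (auto simp: nth_default_def)
  qed
  moreover have "poly ?p x = 0" using l(3) by (simp add: eval_R0)
  ultimately show "algebraic_over K x" unfolding algebraic_over_def by blast
qed


section \<open>Transitivity of algebraicity (via HOL-Algebra)\<close>

lemma sf_subring_R0: "is_subfield K \<Longrightarrow> subring K (R0::'a::field ring)"
  using subfield_R0_iff subfieldE(1) by blast

lemma algebraics_sf:
  assumes "is_subfield (G::'a::field set)"
  shows "is_subfield {x. algebraic_over G x}"
proof -
  have "subfield {x \<in> carrier R0. (ring.algebraic (R0::'a ring) over G) x} R0"
    using field.subfield_of_algebraics[OF field_R0] assms subfield_R0_iff by blast
  moreover have "{x \<in> carrier R0. (ring.algebraic (R0::'a ring) over G) x} = {x. algebraic_over G x}"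
    using algebraic_bridge[OF assms] by auto
  ultimately show ?thesis using subfield_R0_iff by metis
qed

lemma alg_trans:
  assumes G: "is_subfield (G::'a::field set)" and E: "E \<subseteq> {x. algebraic_over G x}"
    and x: "algebraic_over E x"
  shows "algebraic_over G x"
proof -
  obtain p where p: "p \<noteq> 0" "\<forall>i. coeff p i \<in> E" "poly p x = 0"
    using x unfolding algebraic_over_def by blast
  define cs where "cs = coeffs p"
  have csE: "set cs \<subseteq> E" unfolding cs_def using p(2)
    by (auto simp: coeffs_def)
  have sfG: "subfield G (R0::'a ring)" using G subfield_R0_iff by blast
  have csalg: "(ring.algebraic (R0::'a ring) over G) c" if "c \<in> set cs" for c
    using csE that E algebraic_bridge[OF G] by auto
  define K1 where "K1 = ring.finite_extension (R0::'a ring) G cs"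
  have sfK1: "subfield K1 R0"
    unfolding K1_def
    by (rule domain.finite_extension_is_subfield[OF domain_R0 sfG]) (use csalg in auto)
  have fd1: "ring.finite_dimension R0 G K1"
    unfolding K1_def
    by (rule domain.finite_extension_finite_dimension(1)[OF domain_R0 sfG]) (use csalg in auto)
  have csK1: "set cs \<subseteq> K1"
    unfolding K1_def by (rule domain.finite_extension_mem[OF domain_R0 subfieldE(1)[OF sfG]]) auto
  have K1: "is_subfield K1" using sfK1 subfield_R0_iff by blast
  have "algebraic_over K1 x"
    unfolding algebraic_over_def
  proof (intro exI conjI allI)
    show "p \<noteq> 0" "poly p x = 0" by (fact p(1)) (fact p(3))
    fix i show "coeff p i \<in> K1"
    proof (cases "i < length cs")
      case True
      then have "coeff p i \<in> set cs" unfolding cs_def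
        by (metis coeffs_nth length_coeffs_degree less_Suc_eq_le nth_mem p(1))
      then show ?thesis using csK1 by auto
    next
      case False
      then have "coeff p i = 0" unfolding cs_def
        by (metis coeff_eq_0 length_coeffs_degree not_less_eq p(1))
      then show ?thesis using sf_0[OF K1] by simp
    qed
  qed
  then have xa: "(ring.algebraic (R0::'a ring) over K1) x" using algebraic_bridge[OF K1] by blast
  have fd2: "ring.finite_dimension R0 K1 (ring.simple_extension R0 K1 x)"
    using domain.finite_dimension_simple_extension[OF domain_R0 sfK1] xa by simp
  have fd3: "ring.finite_dimension R0 G (ring.simple_extension R0 K1 x)"
    by (rule ring.telescopic_base_dim(1)[OF ring_R0 sfG sfK1 fd1 fd2])
  have sub: "subring (ring.simple_extension R0 K1 x) R0"
    by (rule domain.simple_extension_is_subring[OF domain_R0 subfieldE(1)[OF sfK1]]) simp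
  have mem: "x \<in> ring.simple_extension R0 K1 x"
    by (rule ring.simple_extension_mem[OF ring_R0 subfieldE(1)[OF sfK1]]) simp
  have "(ring.algebraic (R0::'a ring) over G) x"
    by (rule ring.finite_dimension_imp_algebraic[OF ring_R0 sfG sub fd3 mem])
  then show ?thesis using algebraic_bridge[OF G] by blast
qed

definition polyin :: "'a::field set \<Rightarrow> 'a poly \<Rightarrow> bool" where
  "polyin F p \<longleftrightarrow> (\<forall>i. coeff p i \<in> F)"

lemma polyin_add: "is_subfield F \<Longrightarrow> polyin F p \<Longrightarrow> polyin F q \<Longrightarrow> polyin F (p + q)"
  unfolding polyin_def by (simp add: sf_add)

lemma polyin_diff: "is_subfield F \<Longrightarrow> polyin F p \<Longrightarrow> polyin F q \<Longrightarrow> polyin F (p - q)"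
  unfolding polyin_def by (simp add: sf_diff)

lemma polyin_mult: "is_subfield F \<Longrightarrow> polyin F p \<Longrightarrow> polyin F q \<Longrightarrow> polyin F (p * q)"
  unfolding polyin_def by (auto simp: coeff_mult intro!: sf_sum sf_mult)

lemma polyin_const: "is_subfield F \<Longrightarrow> c \<in> F \<Longrightarrow> polyin F [:c:]"
  unfolding polyin_def by (auto simp: coeff_pCons sf_0 split: nat.splits)

lemma polyin_one: "is_subfield F \<Longrightarrow> polyin F 1"
  using polyin_const[of F 1] sf_1[of F] by (simp add: one_pCons)

lemma polyin_X: "is_subfield F \<Longrightarrow> polyin F [:0, 1:]"
  unfolding polyin_def by (auto simp: coeff_pCons sf_0 sf_1 split: nat.splits)

lemma polyin_power: "is_subfield F \<Longrightarrow> polyin F p \<Longrightarrow> polyin F (p ^ n)"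
  by (induct n) (auto intro: polyin_one polyin_mult)

lemma polyin_prod: "is_subfield F \<Longrightarrow> (\<And>i. i \<in> I \<Longrightarrow> polyin F (f i)) \<Longrightarrow> polyin F (prod f I)"
  by (induct I rule: infinite_finite_induct) (auto intro: polyin_one polyin_mult)

lemma polyin_monom: "is_subfield F \<Longrightarrow> c \<in> F \<Longrightarrow> polyin F (monom c n)"
  unfolding polyin_def by (auto simp: coeff_monom sf_0)

lemma polyin_sum: "is_subfield F \<Longrightarrow> (\<And>i. i \<in> I \<Longrightarrow> polyin F (f i)) \<Longrightarrow> polyin F (sum f I)"
  unfolding polyin_def by (auto simp: coeff_sum intro!: sf_sum)

lemma poly_in_sf: "is_subfield G \<Longrightarrow> polyin F p \<Longrightarrow> F \<subseteq> G \<Longrightarrow> x \<in> G \<Longrightarrow> poly p x \<in> G"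
  unfolding polyin_def poly_altdef
  by (auto intro!: sf_sum sf_mult sf_power)

section \<open>Simple extensions as rational functions\<close>

definition FR :: "'a::field set \<Rightarrow> 'a \<Rightarrow> 'a set" where
  "FR F x = {poly p x / poly q x | p q. polyin F p \<and> polyin F q \<and> poly q x \<noteq> 0}"

lemma FR_sf:
  assumes F: "is_subfield F"
  shows "is_subfield (FR F x)"
proof -
  have one: "polyin F 1" by (rule polyin_one[OF F])
  have mem: "u \<in> FR F x" if "u = poly p x / poly q x" "polyin F p" "polyin F q" "poly q x \<noteq> 0" for u p q
    using that unfolding FR_def by blast
  have z: "0 \<in> FR F x" by (rule mem[of _ 0 1]) (use one in \<open>auto simp: polyin_def sf_0 F\<close>)
  show ?thesis unfolding is_subfield_def
  proof (intro conjI ballI)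
    show "0 \<in> FR F x" by (rule z)
    show "1 \<in> FR F x" by (rule mem[of _ 1 1]) (auto simp: one)
  next
    fix u v assume "u \<in> FR F x" "v \<in> FR F x"
    then obtain p1 q1 p2 q2 where u: "u = poly p1 x / poly q1 x" "polyin F p1" "polyin F q1" "poly q1 x \<noteq> 0"
      and v: "v = poly p2 x / poly q2 x" "polyin F p2" "polyin F q2" "poly q2 x \<noteq> 0"
      unfolding FR_def by blast
    show "u + v \<in> FR F x"
      unfolding u(1) v(1) by (rule mem[of _ "p1 * q2 + p2 * q1" "q1 * q2"])
         (use u(2-4) v(2-4) in \<open>auto simp: field_simps intro!: polyin_add polyin_mult F\<close>)
    show "u - v \<in> FR F x"
      unfolding u(1) v(1) by (rule mem[of _ "p1 * q2 - p2 * q1" "q1 * q2"])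
         (use u(2-4) v(2-4) in \<open>auto simp: field_simps intro!: polyin_diff polyin_mult F\<close>)
    show "u * v \<in> FR F x"
      unfolding u(1) v(1) by (rule mem[of _ "p1 * p2" "q1 * q2"])
         (use u(2-4) v(2-4) in \<open>auto simp: field_simps intro!: polyin_mult F\<close>)
  next
    fix u assume "u \<in> FR F x"
    then obtain p1 q1 where u: "u = poly p1 x / poly q1 x" "polyin F p1" "polyin F q1" "poly q1 x \<noteq> 0"
      unfolding FR_def by blast
    show "inverse u \<in> FR F x"
    proof (cases "poly p1 x = 0")
      case True
      then show ?thesis using z u by simp
    next
      case False
      then show ?thesis using mem[of _ q1 p1] u by auto
    qed
  qed
qed

lemma FR_incl: "is_subfield F \<Longrightarrow> F \<subseteq> FR F x"
proof
  fix c assume "is_subfield F" "c \<in> F"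
  then show "c \<in> FR F x" unfolding FR_def
    by (intro CollectI exI[of _ "[:c:]"] exI[of _ 1]) (auto intro: polyin_const polyin_one)
qed

lemma FR_x: "is_subfield F \<Longrightarrow> x \<in> FR F x"
  unfolding FR_def
  by (intro CollectI exI[of _ "[:0,1:]"] exI[of _ 1]) (auto intro: polyin_X polyin_one)

lemma gen_field_FR: "is_subfield F \<Longrightarrow> gen_field (F \<union> {x}) \<subseteq> FR F x"
  by (intro gen_field_least FR_sf) (auto simp: FR_incl FR_x)

lemma gen_field_FR_obtain:
  assumes "is_subfield F" "u \<in> gen_field (F \<union> {x})"
  obtains p q where "polyin F p" "polyin F q" "poly q x \<noteq> 0" "u = poly p x / poly q x"
  using gen_field_FR[OF assms(1)] assms(2) unfolding FR_def by blast


section \<open>Monomials and algebraic independence\<close>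

definition mnm :: "('a \<Rightarrow> nat) \<Rightarrow> 'a::field" where
  "mnm e = (\<Prod>x\<in>{x. e x \<noteq> 0}. x ^ e x)"

lemma alg_indepI:
  assumes "\<And>E c e0. finite E \<Longrightarrow> (\<forall>e\<in>E. finite {x. e x \<noteq> 0} \<and> {x. e x \<noteq> 0} \<subseteq> B \<and> c e \<in> F)
     \<Longrightarrow> (\<Sum>e\<in>E. c e * mnm e) = 0 \<Longrightarrow> e0 \<in> E \<Longrightarrow> c e0 = 0"
  shows "alg_indep F B"
  unfolding alg_indep_def using assms unfolding mnm_def by blast

lemma alg_indepD:
  assumes "alg_indep F B" "finite E" "\<forall>e\<in>E. finite {x. e x \<noteq> 0} \<and> {x. e x \<noteq> 0} \<subseteq> B \<and> c e \<in> F"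
     "(\<Sum>e\<in>E. c e * mnm e) = 0" "e0 \<in> E"
  shows "c e0 = 0"
  using assms unfolding alg_indep_def mnm_def by blast

lemma alg_indep_mono: "alg_indep F B \<Longrightarrow> B' \<subseteq> B \<Longrightarrow> alg_indep F B'"
  by (rule alg_indepI) (erule alg_indepD, auto)

lemma mnm_superset:
  assumes "finite S" "{x. e x \<noteq> 0} \<subseteq> S"
  shows "mnm e = (\<Prod>x\<in>S. x ^ e x)"
  unfolding mnm_def by (rule prod.mono_neutral_left) (use assms in auto)

lemma mnm_upd:
  assumes "finite {x. e x \<noteq> 0}" "e g = 0"
  shows "mnm (e(g := i)) = g ^ i * mnm e"
proof -
  let ?S = "{x. e x \<noteq> 0}"
  have gS: "g \<notin> ?S" using assms(2) by simp
  have "mnm (e(g := i)) = (\<Prod>x\<in>insert g ?S. x ^ (e(g := i)) x)"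
    by (rule mnm_superset) (use assms in auto)
  also have "\<dots> = g ^ i * (\<Prod>x\<in>?S. x ^ (e(g := i)) x)"
    using assms(1) gS by simp
  also have "(\<Prod>x\<in>?S. x ^ (e(g := i)) x) = (\<Prod>x\<in>?S. x ^ e x)"
    by (rule prod.cong) (use gS in auto)
  finally show ?thesis unfolding mnm_def by simp
qed

lemma mnm_zero: "mnm (\<lambda>_. 0) = 1"
  unfolding mnm_def by simp

lemma mnm_in: "is_subfield G \<Longrightarrow> {x. e x \<noteq> 0} \<subseteq> G \<Longrightarrow> mnm e \<in> G"
  unfolding mnm_def by (auto intro!: sf_prod sf_power)

lemma alg_indep_empty: "alg_indep F {}"
proof (rule alg_indepI)
  fix E c e0
  assume E: "finite E" and cond: "\<forall>e\<in>E. finite {x. e x \<noteq> 0} \<and> {x. e x \<noteq> 0} \<subseteq> {} \<and> c e \<in> F"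
    and s: "(\<Sum>e\<in>E. c e * mnm e) = 0" and e0: "e0 \<in> E"
  have z: "e = (\<lambda>_. 0)" if "e \<in> E" for e using cond that by auto
  then have "E = {\<lambda>_. 0}" using e0 by auto
  then show "c e0 = 0" using s e0 by (simp add: mnm_zero)
qed

lemma poly_sum_upto:
  assumes "degree (p::'a::field poly) \<le> N"
  shows "poly p x = (\<Sum>i\<le>N. coeff p i * x ^ i)"
  unfolding poly_altdef
  by (rule sum.mono_neutral_left) (use assms in \<open>auto simp: coeff_eq_0\<close>)

lemma alg_indep_single:
  assumes ai: "alg_indep F {b}"
  shows "\<not> algebraic_over F b"
proof
  assume "algebraic_over F b"
  then obtain p where p: "p \<noteq> 0" "\<forall>i. coeff p i \<in> F" "poly p b = 0"
    unfolding algebraic_over_def by blast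
  define h where "h = (\<lambda>i::nat. (\<lambda>_. 0::nat)(b := i))"
  define E where "E = h ` {..degree p}"
  define c where "c e = coeff p (e b)" for e :: "'a \<Rightarrow> nat"
  have inj: "inj_on h {..degree p}" unfolding h_def inj_on_def by (metis fun_upd_same)
  have mh: "mnm ((\<lambda>_. 0)(b := i)) = b ^ i" for i
    using mnm_upd[of "\<lambda>_. 0" b i] by (simp add: mnm_zero)
  have "(\<Sum>e\<in>E. c e * mnm e) = (\<Sum>i\<le>degree p. c (h i) * mnm (h i))"
    unfolding E_def by (rule sum.reindex[OF inj, unfolded comp_def])
  also have "\<dots> = poly p b" by (simp add: poly_altdef mh c_def h_def)
  finally have s: "(\<Sum>e\<in>E. c e * mnm e) = 0" using p(3) by simp
  have "c (h (degree p)) = 0"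
  proof (rule alg_indepD[OF ai _ _ s])
    show "finite E" unfolding E_def by simp
    show "\<forall>e\<in>E. finite {x. e x \<noteq> 0} \<and> {x. e x \<noteq> 0} \<subseteq> {b} \<and> c e \<in> F"
      unfolding E_def h_def c_def using p(2) by (auto intro: finite_subset[of _ "{b}"])
    show "h (degree p) \<in> E" unfolding E_def by simp
  qed
  then have "lead_coeff p = 0" unfolding c_def h_def by simp
  then show False using p(1) by simp
qed


lemma AI_X:
  assumes F: "is_subfield F" and g: "g \<notin> B" and ai: "alg_indep F (insert g B)"
  shows "alg_indep (gen_field (F \<union> {g})) B"
proof (rule alg_indepI)
  fix E c e0
  assume E: "finite E" and cond: "\<forall>e\<in>E. finite {x. e x \<noteq> 0} \<and> {x. e x \<noteq> 0} \<subseteq> B \<and> c e \<in> gen_field (F \<union> {g})"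
    and s0: "(\<Sum>e\<in>E. c e * mnm e) = 0" and e0: "e0 \<in> E"
  have eg: "e g = 0" if "e \<in> E" for e using cond that g by auto
  have "\<forall>e\<in>E. \<exists>p q. polyin F p \<and> polyin F q \<and> poly q g \<noteq> 0 \<and> c e = poly p g / poly q g"
  proof
    fix e assume "e \<in> E"
    then have "c e \<in> gen_field (F \<union> {g})" using cond by blast
    then obtain p q where "polyin F p" "polyin F q" "poly q g \<noteq> 0" "c e = poly p g / poly q g"
      using gen_field_FR_obtain[OF F] by metis
    then show "\<exists>p q. polyin F p \<and> polyin F q \<and> poly q g \<noteq> 0 \<and> c e = poly p g / poly q g" by blast
  qed
  then obtain P Q where PQ: "\<And>e. e \<in> E \<Longrightarrow> polyin F (P e) \<and> polyin F (Q e) \<and> poly (Q e) g \<noteq> 0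
      \<and> c e = poly (P e) g / poly (Q e) g"
    by metis
  define D where "D = (\<Prod>e\<in>E. poly (Q e) g)"
  have D0: "D \<noteq> 0" unfolding D_def using E PQ by simp
  define P' where "P' e = P e * (\<Prod>e'\<in>E - {e}. Q e')" for e
  have cP': "c e * D = poly (P' e) g" if "e \<in> E" for e
  proof -
    have "D = poly (Q e) g * (\<Prod>e'\<in>E - {e}. poly (Q e') g)"
      unfolding D_def using E that by (simp add: prod.remove)
    moreover have "poly (P' e) g = poly (P e) g * (\<Prod>e'\<in>E - {e}. poly (Q e') g)"
      unfolding P'_def by (simp add: poly_prod)
    moreover have "c e * poly (Q e) g = poly (P e) g" using PQ[OF that] by simp
    ultimately show ?thesis by (simp add: mult.assoc)
  qed
  have P'in: "polyin F (P' e)" if "e \<in> E" for e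
    unfolding P'_def using PQ that by (auto intro!: polyin_mult polyin_prod F)
  define N where "N = Max ((\<lambda>e. degree (P' e)) ` E)"
  have deg: "degree (P' e) \<le> N" if "e \<in> E" for e
    unfolding N_def using E that by simp
  define h where "h = (\<lambda>(e::'a \<Rightarrow> nat, i::nat). e(g := i))"
  have inj: "inj_on h (E \<times> {..N})"
  proof (rule inj_onI)
    fix x y assume x: "x \<in> E \<times> {..N}" and y: "y \<in> E \<times> {..N}" and hxy: "h x = h y"
    obtain e i where xe: "x = (e, i)" by fastforce
    obtain e' i' where ye: "y = (e', i')" by fastforce
    have "e(g := i) = e'(g := i')" using hxy unfolding xe ye h_def by simp
    then have ii: "i = i'" by (metis fun_upd_same)
    have "e = (e(g := i))(g := 0)" using eg x xe by auto
    also have "\<dots> = (e'(g := i'))(g := 0)" using \<open>e(g := i) = e'(g := i')\<close> by simp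
    also have "\<dots> = e'" using eg y ye by auto
    finally show "x = y" using xe ye ii by simp
  qed
  define c2 where "c2 e' = coeff (P' (e'(g := 0))) (e' g)" for e'
  have c2h: "c2 (h (e, i)) = coeff (P' e) i" if "e \<in> E" for e i
    unfolding c2_def h_def using eg[OF that] by (simp add: fun_upd_idem)
  have mh: "mnm (h (e, i)) = g ^ i * mnm e" if "e \<in> E" for e i
    unfolding h_def using mnm_upd[of e g i] cond that eg by auto
  have "0 = D * (\<Sum>e\<in>E. c e * mnm e)" using s0 by simp
  also have "\<dots> = (\<Sum>e\<in>E. poly (P' e) g * mnm e)"
    unfolding sum_distrib_left by (rule sum.cong) (auto simp: cP'[symmetric] ac_simps)
  also have "\<dots> = (\<Sum>e\<in>E. \<Sum>i\<le>N. coeff (P' e) i * (g ^ i * mnm e))"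
    by (rule sum.cong) (auto simp: poly_sum_upto[OF deg] sum_distrib_right sum_distrib_left ac_simps)
  also have "\<dots> = (\<Sum>x\<in>E \<times> {..N}. c2 (h x) * mnm (h x))"
    unfolding sum.cartesian_product by (rule sum.cong) (auto simp: c2h mh)
  also have "\<dots> = (\<Sum>e'\<in>h ` (E \<times> {..N}). c2 e' * mnm e')"
    by (rule sum.reindex[OF inj, unfolded comp_def, symmetric])
  finally have s2: "(\<Sum>e'\<in>h ` (E \<times> {..N}). c2 e' * mnm e') = 0" by simp
  have zero: "coeff (P' e) i = 0" if "e \<in> E" "i \<le> N" for e i
  proof -
    have "c2 (h (e, i)) = 0"
    proof (rule alg_indepD[OF ai _ _ s2])
      show "finite (h ` (E \<times> {..N}))" using E by simp
      show "h (e, i) \<in> h ` (E \<times> {..N})" using that by simp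
      show "\<forall>e'\<in>h ` (E \<times> {..N}). finite {x. e' x \<noteq> 0} \<and> {x. e' x \<noteq> 0} \<subseteq> insert g B \<and> c2 e' \<in> F"
      proof
        fix e' assume "e' \<in> h ` (E \<times> {..N})"
        then obtain e1 i1 where e1: "e1 \<in> E" "i1 \<le> N" "e' = h (e1, i1)" by auto
        have sub: "{x. e' x \<noteq> 0} \<subseteq> insert g {x. e1 x \<noteq> 0}" using e1 unfolding h_def by auto
        have "finite {x. e1 x \<noteq> 0}" using cond e1(1) by blast
        then have "finite {x. e' x \<noteq> 0}" using sub by (meson finite_insert finite_subset)
        moreover have "{x. e' x \<noteq> 0} \<subseteq> insert g B" using sub cond e1(1) by auto
        moreover have "c2 e' \<in> F" using e1 c2h P'in unfolding polyin_def by auto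
        ultimately show "finite {x. e' x \<noteq> 0} \<and> {x. e' x \<noteq> 0} \<subseteq> insert g B \<and> c2 e' \<in> F" by blast
      qed
    qed
    then show ?thesis using c2h that by simp
  qed
  have "P' e0 = 0"
  proof (rule poly_eqI)
    fix i show "coeff (P' e0) i = coeff 0 i"
    proof (cases "i \<le> N")
      case True then show ?thesis using zero e0 by simp
    next
      case False then show ?thesis using deg[OF e0] by (simp add: coeff_eq_0)
    qed
  qed
  then have "c e0 * D = 0" using cP'[OF e0] by simp
  then show "c e0 = 0" using D0 by simp
qed

lemma AI_step:
  assumes ai: "alg_indep F B" and b: "b \<notin> B" and F: "is_subfield F"
    and tr: "\<not> algebraic_over (gen_field (F \<union> B)) b"
  shows "alg_indep F (insert b B)"
proof (rule alg_indepI)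
  fix E c e0
  assume E: "finite E" and cond: "\<forall>e\<in>E. finite {x. e x \<noteq> 0} \<and> {x. e x \<noteq> 0} \<subseteq> insert b B \<and> c e \<in> F"
    and s0: "(\<Sum>e\<in>E. c e * mnm e) = 0" and e0: "e0 \<in> E"
  define G where "G = gen_field (F \<union> B)"
  have G: "is_subfield G" unfolding G_def by (rule gen_field_sf)
  have FG: "F \<subseteq> G" and BG: "B \<subseteq> G" unfolding G_def using gen_field_incl by blast+
  define N where "N = Max ((\<lambda>e. e b) ` E)"
  have eN: "e b \<le> N" if "e \<in> E" for e unfolding N_def using E that by simp
  define A where "A i = (\<Sum>e\<in>{e\<in>E. e b = i}. c e * mnm (e(b := 0)))" for i
  have msplit: "mnm e = b ^ (e b) * mnm (e(b := 0))" if "e \<in> E" for e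
  proof -
    have "{x. (e(b := 0)) x \<noteq> 0} \<subseteq> {x. e x \<noteq> 0}" by auto
    moreover have "finite {x. e x \<noteq> 0}" using cond that by blast
    ultimately have "finite {x. (e(b := 0)) x \<noteq> 0}" by (rule finite_subset)
    then have "mnm ((e(b := 0))(b := e b)) = b ^ (e b) * mnm (e(b := 0))"
      by (rule mnm_upd) simp
    then show ?thesis by simp
  qed
  have "(\<Sum>e\<in>E. c e * mnm e) = (\<Sum>i\<in>{..N}. \<Sum>e\<in>{e\<in>E. e b = i}. c e * mnm e)"
    by (rule sum.group[symmetric]) (use E eN in auto)
  also have "\<dots> = (\<Sum>i\<le>N. A i * b ^ i)"
    unfolding A_def sum_distrib_right
    by (rule sum.cong[OF refl], rule sum.cong[OF refl]) (auto simp: msplit ac_simps)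
  finally have sA: "(\<Sum>i\<le>N. A i * b ^ i) = 0" using s0 by simp
  define P where "P = (\<Sum>i\<le>N. monom (A i) i)"
  have cP: "coeff P j = (if j \<le> N then A j else 0)" for j
    unfolding P_def by (simp add: coeff_sum coeff_monom)
  have AG: "A i \<in> G" for i
    unfolding A_def
  proof (rule sf_sum[OF G])
    fix e assume e: "e \<in> {e \<in> E. e b = i}"
    have "c e \<in> G" using cond e FG by auto
    moreover have "mnm (e(b := 0)) \<in> G"
      by (rule mnm_in[OF G]) (use cond e BG in auto)
    ultimately show "c e * mnm (e(b := 0)) \<in> G" by (rule sf_mult[OF G])
  qed
  have "poly P b = 0" unfolding P_def using sA by (simp add: poly_sum poly_monom)
  moreover have "\<forall>i. coeff P i \<in> G" using cP AG sf_0[OF G] by simp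
  ultimately have "P = 0" using tr unfolding algebraic_over_def G_def by blast
  then have A0: "A i = 0" if "i \<le> N" for i using cP[of i] that by simp
  define i0 where "i0 = e0 b"
  define S where "S = {e\<in>E. e b = i0}"
  define c' where "c' e' = c (e'(b := i0))" for e'
  have inj: "inj_on (\<lambda>e. e(b := 0)) S"
  proof (rule inj_onI)
    fix x y assume "x \<in> S" "y \<in> S" "x(b := 0) = y(b := 0)"
    have "x = (x(b := 0))(b := i0)" using \<open>x \<in> S\<close> unfolding S_def by auto
    also have "\<dots> = (y(b := 0))(b := i0)" using \<open>x(b := 0) = y(b := 0)\<close> by simp
    also have "\<dots> = y" using \<open>y \<in> S\<close> unfolding S_def by auto
    finally show "x = y" .
  qed
  have "(\<Sum>e'\<in>(\<lambda>e. e(b := 0)) ` S. c' e' * mnm e') = (\<Sum>e\<in>S. c' (e(b := 0)) * mnm (e(b := 0)))"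
    by (rule sum.reindex[OF inj, unfolded comp_def])
  also have "\<dots> = A i0" unfolding A_def S_def c'_def by (rule sum.cong) auto
  also have "\<dots> = 0" using A0 eN[OF e0] unfolding i0_def by simp
  finally have s': "(\<Sum>e'\<in>(\<lambda>e. e(b := 0)) ` S. c' e' * mnm e') = 0" .
  have "c' (e0(b := 0)) = 0"
  proof (rule alg_indepD[OF ai _ _ s'])
    show "finite ((\<lambda>e. e(b := 0)) ` S)" using E unfolding S_def by simp
    show "e0(b := 0) \<in> (\<lambda>e. e(b := 0)) ` S" using e0 unfolding S_def i0_def by simp
    show "\<forall>e'\<in>(\<lambda>e. e(b := 0)) ` S. finite {x. e' x \<noteq> 0} \<and> {x. e' x \<noteq> 0} \<subseteq> B \<and> c' e' \<in> F"
    proof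
      fix e' assume "e' \<in> (\<lambda>e. e(b := 0)) ` S"
      then obtain e where e: "e \<in> S" "e' = e(b := 0)" by auto
      have "{x. e' x \<noteq> 0} \<subseteq> {x. e x \<noteq> 0}" using e by auto
      moreover have "finite {x. e x \<noteq> 0}" using cond e unfolding S_def by blast
      ultimately have "finite {x. e' x \<noteq> 0}" by (rule finite_subset)
      moreover have "{x. e' x \<noteq> 0} \<subseteq> B" using cond e unfolding S_def by auto
      moreover have "c' e' \<in> F" using cond e unfolding S_def c'_def by auto
      ultimately show "finite {x. e' x \<noteq> 0} \<and> {x. e' x \<noteq> 0} \<subseteq> B \<and> c' e' \<in> F" by blast
    qed
  qed
  then show "c e0 = 0" unfolding c'_def i0_def by simp
qed

lemma AI_M1:
  assumes "finite B"
  shows "is_subfield F \<Longrightarrow> alg_indep F (insert b B) \<Longrightarrow> b \<notin> B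
    \<Longrightarrow> \<not> algebraic_over (gen_field (F \<union> B)) b"
  using assms
proof (induct B arbitrary: F rule: finite_induct)
  case empty
  then show ?case by (simp add: alg_indep_single gen_field_idem)
next
  case (insert g B')
  have gnot: "g \<notin> insert b B'" using insert by auto
  have "alg_indep F (insert g (insert b B'))" using insert(5) by (simp add: insert_commute)
  then have ai: "alg_indep (gen_field (F \<union> {g})) (insert b B')"
    by (rule AI_X[OF insert(4) gnot])
  have "\<not> algebraic_over (gen_field (gen_field (F \<union> {g}) \<union> B')) b"
    by (rule insert(3)[OF gen_field_sf ai]) (use insert in auto)
  moreover have "gen_field (gen_field (F \<union> {g}) \<union> B') = gen_field (F \<union> insert g B')"
    unfolding gen_field_assoc by (simp add: Un_assoc)
  ultimately show ?case by simp
qed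


section \<open>Algebraic closure operator and exchange\<close>

definition cl :: "'a::field set \<Rightarrow> 'a set \<Rightarrow> 'a set" where
  "cl F S = {x. algebraic_over (gen_field (F \<union> S)) x}"

definition mindep :: "'a::field set \<Rightarrow> 'a set \<Rightarrow> bool" where
  "mindep F B \<longleftrightarrow> (\<forall>b\<in>B. b \<notin> cl F (B - {b}))"

lemma cl_gen: "gen_field (F \<union> S) \<subseteq> cl F S"
  unfolding cl_def using algebraic_in_sf[OF gen_field_sf] by blast

lemma cl_incl: "S \<subseteq> cl F S" and cl_incl_F: "F \<subseteq> cl F S"
  using cl_gen gen_field_incl by blast+

lemma cl_mono: assumes "S \<subseteq> T" shows "cl F S \<subseteq> cl F T"
proof
  fix x assume "x \<in> cl F S"
  moreover have "gen_field (F \<union> S) \<subseteq> gen_field (F \<union> T)" using assms by (intro gen_field_mono) auto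
  ultimately show "x \<in> cl F T" unfolding cl_def using algebraic_mono by blast
qed

lemma cl_sf: "is_subfield (cl F S)"
  unfolding cl_def by (rule algebraics_sf[OF gen_field_sf])

lemma cl_trans:
  assumes "S \<subseteq> cl F T" shows "cl F S \<subseteq> cl F T"
proof
  fix x assume x: "x \<in> cl F S"
  have "gen_field (F \<union> S) \<subseteq> cl F T"
    by (rule gen_field_least[OF cl_sf]) (use assms cl_incl_F in blast)
  then have "gen_field (F \<union> S) \<subseteq> {x. algebraic_over (gen_field (F \<union> T)) x}"
    unfolding cl_def by simp
  moreover have "algebraic_over (gen_field (F \<union> S)) x" using x unfolding cl_def by simp
  ultimately have "algebraic_over (gen_field (F \<union> T)) x"
    by (rule alg_trans[OF gen_field_sf])
  then show "x \<in> cl F T" unfolding cl_def by simp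
qed

lemma cl_exchange:
  assumes x: "x \<in> cl F (insert y A)" and nx: "x \<notin> cl F A"
  shows "y \<in> cl F (insert x A)"
proof (rule ccontr)
  assume ny: "y \<notin> cl F (insert x A)"
  have xy: "x \<noteq> y" using ny cl_incl by blast
  define E where "E = gen_field (F \<union> A)"
  have E: "is_subfield E" unfolding E_def by (rule gen_field_sf)
  have gE: "gen_field (E \<union> C) = gen_field (F \<union> (A \<union> C))" for C
    unfolding E_def gen_field_assoc by (simp add: Un_assoc)
  have n1: "\<not> algebraic_over (gen_field (E \<union> {})) x"
    using nx gE[of "{}"] unfolding cl_def by simp
  have a1: "alg_indep E (insert x {})" using AI_step[OF alg_indep_empty _ E n1] by simp
  have n2: "\<not> algebraic_over (gen_field (E \<union> {x})) y"
    using ny gE[of "{x}"] unfolding cl_def by simp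
  have "alg_indep E (insert y {x})" using AI_step[OF a1 _ E n2] xy by simp
  then have a2: "alg_indep E (insert x {y})" by (simp add: insert_commute)
  have "\<not> algebraic_over (gen_field (E \<union> {y})) x"
    using AI_M1[OF _ E a2] xy by simp
  then show False using x gE[of "{y}"] unfolding cl_def by simp
qed

lemma exchange_card:
  assumes "finite S" "finite B" "mindep F B" "B \<subseteq> cl F S"
  shows "card B \<le> card S"
  using assms
proof (induct "card (S - B)" arbitrary: S rule: less_induct)
  case less
  show ?case
  proof (cases "S - B = {}")
    case True
    have "B \<subseteq> S"
    proof
      fix b assume b: "b \<in> B"
      show "b \<in> S"
      proof (rule ccontr)
        assume "b \<notin> S"
        then have "S \<subseteq> B - {b}" using True by auto
        then have "b \<in> cl F (B - {b})" using less(5) b cl_mono by blast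
        then show False using less(4) b unfolding mindep_def by blast
      qed
    qed
    then show ?thesis using less(2) by (simp add: card_mono)
  next
    case False
    then obtain s where s: "s \<in> S" "s \<notin> B" by auto
    define S0 where "S0 = S - {s}"
    have S0: "finite S0" using less(2) unfolding S0_def by simp
    have eq: "S0 - B = (S - B) - {s}" unfolding S0_def by auto
    have lt: "card (S0 - B) < card (S - B)"
      unfolding eq by (rule card_Diff1_less) (use s less(2) in auto)
    show ?thesis
    proof (cases "B \<subseteq> cl F S0")
      case True
      have "card B \<le> card S0" by (rule less(1)[OF lt S0 less(3,4) True])
      also have "\<dots> \<le> card S" unfolding S0_def using less(2) by (simp add: card_mono)
      finally show ?thesis .
    next
      case False
      then obtain b where b: "b \<in> B" "b \<notin> cl F S0" by auto
      have "b \<in> cl F (insert s S0)" using less(5) b s unfolding S0_def by (auto simp: insert_absorb)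
      then have sb: "s \<in> cl F (insert b S0)" by (rule cl_exchange[OF _ b(2)])
      define S' where "S' = insert b S0"
      have "S \<subseteq> cl F S'" unfolding S'_def using sb cl_incl[of "insert b S0" F] S0_def by auto
      then have "cl F S \<subseteq> cl F S'" by (rule cl_trans)
      then have BS': "B \<subseteq> cl F S'" using less(5) by auto
      have bS0: "b \<notin> S0" using b(2) cl_incl by blast
      have cS': "card S' = card S"
        unfolding S'_def S0_def using bS0 S0 s less(2) unfolding S0_def
        by (simp add: card_Diff_singleton_if) (metis Suc_pred card_gt_0_iff empty_iff)
      have "S' - B = S0 - B" unfolding S'_def using b by auto
      then have lt': "card (S' - B) < card (S - B)" using lt by simp
      have "card B \<le> card S'"
        by (rule less(1)[OF lt' _ less(3,4) BS']) (use S0 in \<open>simp add: S'_def\<close>)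
      then show ?thesis using cS' by simp
    qed
  qed
qed

lemma mindep_of_card:
  assumes S: "finite S" and B: "finite B" "mindep F B" "B \<subseteq> cl F S" and c: "card S \<le> card B"
  shows "mindep F S"
  unfolding mindep_def
proof
  fix s assume s: "s \<in> S"
  show "s \<notin> cl F (S - {s})"
  proof
    assume "s \<in> cl F (S - {s})"
    then have "S \<subseteq> cl F (S - {s})" using cl_incl[of "S - {s}" F] by auto
    then have "cl F S \<subseteq> cl F (S - {s})" by (rule cl_trans)
    then have "B \<subseteq> cl F (S - {s})" using B by auto
    then have "card B \<le> card (S - {s})" using exchange_card[OF _ B(1,2)] S by simp
    moreover have "card (S - {s}) < card S" by (rule card_Diff1_less[OF S s])
    ultimately show False using c by simp
  qed
qed

lemma mindep_mono: "mindep F B \<Longrightarrow> B' \<subseteq> B \<Longrightarrow> mindep F B'"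
  unfolding mindep_def using cl_mono[of "B' - {_}" "B - {_}" F] by blast

lemma mindep_alg_indep:
  assumes "finite B" shows "is_subfield F \<Longrightarrow> mindep F B \<Longrightarrow> alg_indep F B"
  using assms
proof (induct B rule: finite_induct)
  case empty
  show ?case by (rule alg_indep_empty)
next
  case (insert b B')
  have "mindep F B'" using insert(5) mindep_mono by blast
  then have ai: "alg_indep F B'" using insert by blast
  have "b \<notin> cl F B'" using insert(5) insert(2) unfolding mindep_def by auto
  then have "\<not> algebraic_over (gen_field (F \<union> B')) b" unfolding cl_def by simp
  then show ?case by (rule AI_step[OF ai insert(2) insert(4)])
qed

lemma alg_indep_mindep:
  assumes "finite B" "is_subfield F" "alg_indep F B"
  shows "mindep F B"
  unfolding mindep_def
proof
  fix b assume b: "b \<in> B"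
  have "alg_indep F (insert b (B - {b}))" using assms(3) b by (simp add: insert_absorb)
  then have "\<not> algebraic_over (gen_field (F \<union> (B - {b}))) b"
    using AI_M1[OF _ assms(2)] assms(1) by blast
  then show "b \<notin> cl F (B - {b})" unfolding cl_def by simp
qed


section \<open>Specialisation\<close>

lemma infinite_nonroot:
  assumes "infinite K" "r \<noteq> (0::'a::field poly)"
  obtains c where "c \<in> K" "poly r c \<noteq> 0"
proof -
  have "finite {x. poly r x = 0}" using poly_roots_finite[OF assms(2)] .
  then have "\<not> K \<subseteq> {x. poly r x = 0}" using assms(1) finite_subset by blast
  then show ?thesis using that by blast
qed

lemma spec1:
  assumes F: "is_subfield F" and k0: "k0 \<subseteq> F" "infinite k0"
    and tr: "\<not> algebraic_over F bb"
    and st: "\<sigma> \<in> gen_field (F \<union> {bb})" "\<tau> \<in> gen_field (F \<union> {bb})"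
    and al: "\<alpha> \<in> F" "\<gamma> \<in> F" and eq: "\<sigma>^2 - \<alpha> * \<tau>^2 = \<gamma>"
  shows "\<exists>x\<in>F. \<exists>y\<in>F. x^2 - \<alpha> * y^2 = \<gamma>"
proof -
  obtain p1 q1 where 1: "polyin F p1" "polyin F q1" "poly q1 bb \<noteq> 0" "\<sigma> = poly p1 bb / poly q1 bb"
    using gen_field_FR_obtain[OF F st(1)] by blast
  obtain p2 q2 where 2: "polyin F p2" "polyin F q2" "poly q2 bb \<noteq> 0" "\<tau> = poly p2 bb / poly q2 bb"
    using gen_field_FR_obtain[OF F st(2)] by blast
  define H where "H = (p1 * q2)^2 - [:\<alpha>:] * (p2 * q1)^2 - [:\<gamma>:] * (q1 * q2)^2"
  have Hin: "polyin F H" unfolding H_def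
    by (intro polyin_diff polyin_mult polyin_power polyin_const F al 1 2)
  have "poly H bb = (poly q1 bb * poly q2 bb)^2 * (\<sigma>^2 - \<alpha> * \<tau>^2 - \<gamma>)"
    unfolding H_def 1(4) 2(4) using 1(3) 2(3) by (simp add: field_simps power2_eq_square)
  then have "poly H bb = 0" using eq by simp
  then have H0: "H = 0" using tr Hin unfolding algebraic_over_def polyin_def by blast
  have "q1 * q2 \<noteq> 0" using 1(3) 2(3) by auto
  then obtain c where c: "c \<in> k0" "poly (q1 * q2) c \<noteq> 0" using infinite_nonroot[OF k0(2)] by blast
  have cF: "c \<in> F" using c k0 by blast
  have q1c: "poly q1 c \<noteq> 0" and q2c: "poly q2 c \<noteq> 0" using c(2) by auto
  have "poly H c = 0" using H0 by simp
  then have "(poly p1 c * poly q2 c)^2 - \<alpha> * (poly p2 c * poly q1 c)^2 - \<gamma> * (poly q1 c * poly q2 c)^2 = 0"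
    unfolding H_def by simp
  then have "(poly p1 c / poly q1 c)^2 - \<alpha> * (poly p2 c / poly q2 c)^2 = \<gamma>"
    using q1c q2c by (simp add: field_simps power2_eq_square)
  moreover have "poly p1 c / poly q1 c \<in> F" "poly p2 c / poly q2 c \<in> F"
    using poly_in_sf[OF F _ subset_refl cF] 1 2 by (auto intro!: sf_divide F)
  ultimately show ?thesis by blast
qed

lemma specN:
  assumes "finite B"
  shows "is_subfield k0 \<Longrightarrow> infinite k0 \<Longrightarrow> alg_indep k0 B \<Longrightarrow>
    \<sigma> \<in> gen_field (k0 \<union> B) \<Longrightarrow> \<tau> \<in> gen_field (k0 \<union> B) \<Longrightarrow> \<alpha> \<in> k0 \<Longrightarrow> \<gamma> \<in> k0 \<Longrightarrow>
    \<sigma>^2 - \<alpha> * \<tau>^2 = \<gamma> \<Longrightarrow> \<exists>x\<in>k0. \<exists>y\<in>k0. x^2 - \<alpha> * y^2 = \<gamma>"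
  using assms
proof (induct B arbitrary: \<sigma> \<tau> rule: finite_induct)
  case empty
  then show ?case using gen_field_idem by auto
next
  case (insert bb B')
  define F where "F = gen_field (k0 \<union> B')"
  have F: "is_subfield F" unfolding F_def by (rule gen_field_sf)
  have k0F: "k0 \<subseteq> F" unfolding F_def using gen_field_incl by blast
  have tr: "\<not> algebraic_over F bb" unfolding F_def
    using AI_M1[OF insert(1) insert(4,6) insert(2)] .
  have g: "gen_field (k0 \<union> insert bb B') = gen_field (F \<union> {bb})"
    unfolding F_def gen_field_assoc by (simp add: Un_assoc insert_commute)
  obtain x y where xy: "x \<in> F" "y \<in> F" "x^2 - \<alpha> * y^2 = \<gamma>"
    using spec1[OF F k0F insert(5) tr _ _ _ _ insert(11)] insert(7-10) k0F g by auto
  have ai: "alg_indep k0 B'" using insert(6) alg_indep_mono by blast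
  show ?case
    by (rule insert(3)[OF insert(4,5) ai _ _ insert(9,10) xy(3)]) (use xy F_def in auto)
qed

section \<open>Quaternion symbol and conic points\<close>

lemma quat_to_point:
  assumes k: "is_subfield k" and a: "a \<in> k" "\<not> (\<exists>c\<in>k. a = c^2)" and q: "quat_class_zero k a b"
  shows "\<exists>p\<in>k. \<exists>q\<in>k. p^2 - a * q^2 = b"
proof -
  obtain x y where xy: "x \<in> k" "y \<in> k" "a * x^2 + b * y^2 = 1"
    using q unfolding quat_class_zero_def by blast
  have y0: "y \<noteq> 0"
  proof
    assume "y = 0"
    then have ax: "a * x^2 = 1" using xy by simp
    then have "x \<noteq> 0" by auto
    then have "a = (inverse x)^2" using ax by (simp add: field_simps power2_eq_square)
    then show False using a(2) sf_inv[OF k xy(1)] by blast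
  qed
  have "(inverse y)^2 - a * (x / y)^2 = b"
    using xy(3) y0 by (simp add: field_simps power2_eq_square)
  moreover have "inverse y \<in> k" "x / y \<in> k" using xy sf_inv sf_divide k by auto
  ultimately show ?thesis by blast
qed

lemma point_to_quat:
  fixes a :: "'a::field"
  assumes k: "is_subfield k" and two: "(2::'a::field) \<noteq> 0" and a0: "a \<noteq> 0" and ak: "a \<in> k"
    and b0: "b \<noteq> 0" and pq: "p \<in> k" "q \<in> k" and e: "p^2 - a * q^2 = b"
  shows "quat_class_zero k a b"
  unfolding quat_class_zero_def
proof (cases "p = 0")
  case False
  have "a * (q / p)^2 + b * (inverse p)^2 = (a * q^2 + b) / p^2"
    using False by (simp add: field_simps power2_eq_square)
  also have "a * q^2 + b = p^2" using e by (simp add: algebra_simps)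
  finally have "a * (q / p)^2 + b * (inverse p)^2 = 1" using False by simp
  moreover have "q / p \<in> k" "inverse p \<in> k" using pq sf_inv sf_divide k by auto
  ultimately show "\<exists>x\<in>k. \<exists>y\<in>k. a * x^2 + b * y^2 = 1" by blast
next
  case True
  then have bq: "b = - a * q^2" using e by simp
  then have q0: "q \<noteq> 0" using b0 by auto
  define x where "x = (1 + inverse a) / 2"
  define y where "y = (inverse a - 1) / (2 * q)"
  have "a * x^2 + b * y^2 = a * (x^2 - (q * y)^2)" unfolding bq by (simp add: algebra_simps power2_eq_square)
  also have "q * y = (inverse a - 1) / 2" unfolding y_def using q0 by (simp add: field_simps)
  also have "x^2 - ((inverse a - 1) / 2)^2 = inverse a"
  proof -
    have four: "(4::'a) \<noteq> 0" using two by (metis mult_2_right mult_eq_0_iff numeral_Bit0)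
    have sixteen: "(16::'a) \<noteq> 0" using four mult_eq_0_iff[of "4::'a" 4] by simp
    show ?thesis unfolding x_def using two four sixteen a0 by (simp add: field_simps power2_eq_square)
  qed
  finally have "a * x^2 + b * y^2 = 1" using a0 by simp
  moreover have two_k: "2 \<in> k" using sf_add[OF k sf_1[OF k] sf_1[OF k]] by simp
  have "x \<in> k" unfolding x_def
    by (rule sf_divide[OF k sf_add[OF k sf_1[OF k] sf_inv[OF k ak]] two_k])
  moreover have "y \<in> k" unfolding y_def
    by (rule sf_divide[OF k sf_diff[OF k sf_inv[OF k ak] sf_1[OF k]] sf_mult[OF k two_k pq(2)]])
  ultimately show "\<exists>x\<in>k. \<exists>y\<in>k. a * x^2 + b * y^2 = 1" by blast
qed

lemma conic_param:
  fixes a b s t p q :: "'a::field"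
  assumes two: "2 \<noteq> (0::'a)" and sp: "s \<noteq> p" and e1: "s^2 - a * t^2 = b" and e2: "p^2 - a * q^2 = b"
    and b0: "b \<noteq> 0"
  defines "u \<equiv> (t - q) / (s - p)"
  shows "1 - a * u^2 \<noteq> 0" "s = (2 * a * q * u - p - a * p * u^2) / (1 - a * u^2)" "t = q + u * (s - p)"
proof -
  have sp': "s - p \<noteq> 0" using sp by simp
  have tq: "t - q = u * (s - p)" unfolding u_def using sp' by simp
  show t: "t = q + u * (s - p)" using tq by (simp add: algebra_simps)
  have "(s - p) * (s + p) = a * (t - q) * (t + q)"
    using e1 e2 by (simp add: algebra_simps power2_eq_square)
  also have "\<dots> = (s - p) * (a * u * (t + q))" unfolding tq by (simp add: algebra_simps)
  finally have "s + p = a * u * (t + q)" using sp' by simp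
  then have key: "s * (1 - a * u^2) = 2 * a * q * u - p - a * p * u^2"
    unfolding t by (simp add: algebra_simps power2_eq_square)
  show nz: "1 - a * u^2 \<noteq> 0"
  proof
    assume h: "1 - a * u^2 = 0"
    have au: "a * u^2 = 1" using h by simp
    have "a * p * u^2 = p * (a * u^2)" by (simp add: algebra_simps)
    then have apu: "a * p * u^2 = p" using au by simp
    have z: "0 = 2 * a * q * u - p - a * p * u^2" using key h by simp
    have "2 * (a * q * u - p) = 2 * a * q * u - p - a * p * u^2" unfolding apu by (simp add: algebra_simps)
    also have "\<dots> = 0" using z by simp
    finally have "2 * (a * q * u - p) = 0" .
    then have "a * q * u - p = 0" using two by (metis mult_eq_0_iff)
    then have paq: "p = a * q * u" by (metis eq_iff_diff_eq_0)
    then have "q = p * u" using h by (simp add: algebra_simps power2_eq_square)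
    then have "b = p^2 - a * (p * u)^2" using e2 by simp
    also have "\<dots> = p^2 * (1 - a * u^2)" by (simp add: algebra_simps power2_eq_square)
    finally have "b = p^2 * (1 - a * u^2)" .
    then show False using h b0 by simp
  qed
  show "s = (2 * a * q * u - p - a * p * u^2) / (1 - a * u^2)"
    using key nz by (simp add: field_simps)
qed


section \<open>The constant embedding into the big field\<close>

lemma bconst_add: "bconst (x + y) = bconst x + bconst (y::'a::field)"
  unfolding bconst_def by (simp add: single_add)

lemma bconst_mult: "bconst (x * y) = bconst x * bconst (y::'a::field)"
  unfolding bconst_def by (simp add: mult_single)

lemma bconst_0: "bconst (0::'a::field) = 0"
  unfolding bconst_def by (simp add: Zero_fract_def)

lemma bconst_1: "bconst (1::'a::field) = 1"
  unfolding bconst_def by (simp add: One_fract_def)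

lemma bconst_inj: "inj (bconst :: 'a::field \<Rightarrow> 'a bigfield)"
proof (rule injI)
  fix x y :: 'a assume "bconst x = bconst y"
  then have "Poly_Mapping.single (0::nat \<Rightarrow>\<^sub>0 nat) x = Poly_Mapping.single 0 y"
    unfolding bconst_def by (simp add: eq_fract)
  then show "x = y" using inj_single[of 0] by (simp add: inj_eq)
qed

lemma bconst_eq_iff: "bconst x = bconst y \<longleftrightarrow> x = (y::'a::field)"
  by (metis bconst_inj injD)

lemma bconst_uminus: "bconst (- x) = - bconst (x::'a::field)"
proof -
  have "bconst x + bconst (- x) = 0" using bconst_add[of x "- x"] by (simp add: bconst_0)
  from add.inverse_unique[OF this] show ?thesis by simp
qed

lemma bconst_diff: "bconst (x - y) = bconst x - bconst (y::'a::field)"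
  using bconst_add[of x "- y"] bconst_uminus[of y] by simp

lemma bconst_inverse: "bconst (inverse x) = inverse (bconst (x::'a::field))"
proof (cases "x = 0")
  case True then show ?thesis by (simp add: bconst_0)
next
  case False
  then have "bconst (inverse x) * bconst x = 1" unfolding bconst_mult[symmetric] by (simp add: bconst_1)
  then show ?thesis by (metis inverse_unique mult.commute)
qed

lemma bconst_power: "bconst (x ^ n) = bconst (x::'a::field) ^ n"
  by (induct n) (simp_all add: bconst_1 bconst_mult)

lemma bconst_sum: "bconst (sum f A) = (\<Sum>x\<in>A. bconst (f x :: 'a::field))"
  by (induct A rule: infinite_finite_induct) (simp_all add: bconst_0 bconst_add)

lemma bconst_prod: "bconst (prod f A) = (\<Prod>x\<in>A. bconst (f x :: 'a::field))"
  by (induct A rule: infinite_finite_induct) (simp_all add: bconst_1 bconst_mult)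

lemma bconst_sf: "is_subfield F \<Longrightarrow> is_subfield (bconst ` (F::'a::field set))"
  unfolding is_subfield_def
  by (auto simp: bconst_0[symmetric] bconst_1[symmetric] bconst_add[symmetric]
      bconst_diff[symmetric] bconst_mult[symmetric] bconst_inverse[symmetric])

lemma bconst_gen_field: "bconst ` gen_field S = gen_field (bconst ` (S::'a::field set))"
proof
  show "gen_field (bconst ` S) \<subseteq> bconst ` gen_field S"
    by (intro gen_field_least bconst_sf gen_field_sf image_mono gen_field_incl)
  define T where "T = {x. bconst x \<in> gen_field (bconst ` S)}"
  have G: "is_subfield (gen_field (bconst ` S))" by (rule gen_field_sf)
  have "is_subfield T" unfolding is_subfield_def
  proof (intro conjI ballI)
    show "0 \<in> T" unfolding T_def using sf_0[OF G] by (simp add: bconst_0)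
    show "1 \<in> T" unfolding T_def using sf_1[OF G] by (simp add: bconst_1)
  next
    fix x y assume xy: "x \<in> T" "y \<in> T"
    then have xy': "bconst x \<in> gen_field (bconst ` S)" "bconst y \<in> gen_field (bconst ` S)"
      unfolding T_def by auto
    show "x + y \<in> T" unfolding T_def using sf_add[OF G xy'] by (simp add: bconst_add)
    show "x - y \<in> T" unfolding T_def using sf_diff[OF G xy'] by (simp add: bconst_diff)
    show "x * y \<in> T" unfolding T_def using sf_mult[OF G xy'] by (simp add: bconst_mult)
  next
    fix x assume "x \<in> T"
    then have x': "bconst x \<in> gen_field (bconst ` S)" unfolding T_def by auto
    show "inverse x \<in> T" unfolding T_def using sf_inv[OF G x'] by (simp add: bconst_inverse)
  qed
  moreover have "S \<subseteq> T"
  proof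
    fix x assume "x \<in> S"
    then have "bconst x \<in> bconst ` S" by simp
    then show "x \<in> T" unfolding T_def using gen_field_incl[of "bconst ` S"] by blast
  qed
  ultimately have "gen_field S \<subseteq> T" by (rule gen_field_least)
  then show "bconst ` gen_field S \<subseteq> gen_field (bconst ` S)" unfolding T_def by blast
qed

lemma bconst_mnm:
  assumes fin: "finite {x. e x \<noteq> 0}" and sub: "{x. e x \<noteq> 0} \<subseteq> bconst ` B"
  shows "mnm e = bconst (mnm (e \<circ> bconst))" "finite {y. (e \<circ> bconst) y \<noteq> 0}"
    "{y. (e \<circ> bconst) y \<noteq> 0} \<subseteq> (B::'a::field set)"
proof -
  have im: "bconst ` {y. (e \<circ> bconst) y \<noteq> 0} = {x. e x \<noteq> 0}" using sub by auto
  have inj: "inj_on bconst {y. (e \<circ> bconst) y \<noteq> 0}" by (rule inj_on_subset[OF bconst_inj]) simp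
  show "finite {y. (e \<circ> bconst) y \<noteq> 0}"
    using im fin inj by (metis finite_image_iff)
  show "{y. (e \<circ> bconst) y \<noteq> 0} \<subseteq> B"
  proof
    fix y assume "y \<in> {y. (e \<circ> bconst) y \<noteq> 0}"
    then have "bconst y \<in> bconst ` B" using sub by auto
    then show "y \<in> B" by (simp add: inj_image_mem_iff[OF bconst_inj])
  qed
  have "mnm e = (\<Prod>x\<in>bconst ` {y. (e \<circ> bconst) y \<noteq> 0}. x ^ e x)" unfolding mnm_def im ..
  also have "\<dots> = (\<Prod>y\<in>{y. (e \<circ> bconst) y \<noteq> 0}. bconst y ^ e (bconst y))"
    using prod.reindex[OF inj, of "\<lambda>x. x ^ e x"] unfolding comp_def by simp
  also have "\<dots> = bconst (mnm (e \<circ> bconst))"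
    unfolding mnm_def bconst_prod bconst_power by simp
  finally show "mnm e = bconst (mnm (e \<circ> bconst))" .
qed

lemma bconst_alg_indep:
  assumes ai: "alg_indep F (B::'a::field set)"
  shows "alg_indep (bconst ` F) (bconst ` B)"
proof (rule alg_indepI)
  fix E c e0
  assume E: "finite E" and cond: "\<forall>e\<in>E. finite {x. e x \<noteq> 0} \<and> {x. e x \<noteq> 0} \<subseteq> bconst ` B \<and> c e \<in> bconst ` F"
    and s0: "(\<Sum>e\<in>E. c e * mnm e) = 0" and e0: "e0 \<in> E"
  define r where "r e = e \<circ> bconst" for e :: "'a bigfield \<Rightarrow> nat"
  have inj: "inj_on r E"
  proof (rule inj_onI)
    fix e e' assume ee: "e \<in> E" "e' \<in> E" "r e = r e'"
    show "e = e'"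
    proof
      fix x show "e x = e' x"
      proof (cases "x \<in> bconst ` B")
        case True
        then obtain y where "x = bconst y" by auto
        then show ?thesis using ee(3) unfolding r_def by (metis comp_apply)
      next
        case False
        have s1: "{x. e x \<noteq> 0} \<subseteq> bconst ` B" using cond ee(1) by blast
        have s2: "{x. e' x \<noteq> 0} \<subseteq> bconst ` B" using cond ee(2) by blast
        have "e x = 0" using s1 False by blast
        moreover have "e' x = 0" using s2 False by blast
        ultimately show ?thesis by simp
      qed
    qed
  qed
  have "\<forall>e\<in>E. \<exists>d\<in>F. c e = bconst d" using cond by blast
  then obtain d where d: "\<And>e. e \<in> E \<Longrightarrow> d e \<in> F \<and> c e = bconst (d e)" by metis
  define c' where "c' e = d (the_inv_into E r e)" for e
  have c'r: "c' (r e) = d e" if "e \<in> E" for e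
    unfolding c'_def using the_inv_into_f_f[OF inj that] by simp
  have mr: "mnm e = bconst (mnm (r e))" if "e \<in> E" for e
    unfolding r_def using bconst_mnm(1) cond that by blast
  have "bconst (\<Sum>e'\<in>r ` E. c' e' * mnm e') = bconst (\<Sum>e\<in>E. d e * mnm (r e))"
    by (simp add: sum.reindex[OF inj] c'r)
  also have "\<dots> = (\<Sum>e\<in>E. c e * mnm e)"
    unfolding bconst_sum bconst_mult using d mr by simp
  also have "\<dots> = bconst 0" using s0 bconst_0 by simp
  finally have s1: "(\<Sum>e'\<in>r ` E. c' e' * mnm e') = 0" by (simp add: bconst_eq_iff)
  have "c' (r e0) = 0"
  proof (rule alg_indepD[OF ai _ _ s1])
    show "finite (r ` E)" using E by simp
    show "r e0 \<in> r ` E" using e0 by simp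
    show "\<forall>e'\<in>r ` E. finite {x. e' x \<noteq> 0} \<and> {x. e' x \<noteq> 0} \<subseteq> B \<and> c' e' \<in> F"
      using cond bconst_mnm(2,3) d c'r unfolding r_def by fastforce
  qed
  then show "c e0 = 0" using c'r[OF e0] d[OF e0] bconst_0 by simp
qed


lemma sf_numeral: "is_subfield G \<Longrightarrow> numeral n \<in> G"
  using sf_of_nat[of G "numeral n"] by simp

lemma param_in:
  assumes "is_subfield G" "a \<in> G" "p \<in> G" "q \<in> G" "u \<in> G"
  shows "(2 * a * q * u - p - a * p * u^2) / (1 - a * u^2) \<in> G"
  by (intro sf_divide sf_diff sf_mult sf_power sf_1 sf_numeral assms)

lemma step_R:
  fixes k :: "'K::field set" and a :: 'K and n :: nat and b s t :: "nat \<Rightarrow> 'K"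
  assumes k: "is_subfield k" and two: "(2::'K) \<noteq> 0"
    and ak: "a \<in> k" and ns: "\<not> (\<exists>c\<in>k. a = c^2)"
    and bk: "\<forall>i\<in>{1..n}. b i \<in> k \<and> b i \<noteq> 0"
    and eq: "\<forall>i\<in>{1..n}. (s i)^2 - a * (t i)^2 = b i"
    and tr: "has_trdeg k (gen_field (k \<union> s ` {1..n} \<union> t ` {1..n})) n"
    and Q: "\<forall>i\<in>{1..n}. quat_class_zero k a (b i)"
  shows "k_rational k (gen_field (k \<union> s ` {1..n} \<union> t ` {1..n}))"
proof -
  define I where "I = {1..n}"
  define L where "L = gen_field (k \<union> s ` I \<union> t ` I)"
  have Lsf: "is_subfield L" unfolding L_def by (rule gen_field_sf)
  have kL: "k \<subseteq> L" and sL: "s ` I \<subseteq> L" and tL: "t ` I \<subseteq> L"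
    using gen_field_incl[of "k \<union> s ` I \<union> t ` I"] unfolding L_def by simp_all
  have cI: "card I = n" unfolding I_def by simp
  obtain B where B: "B \<subseteq> L" "finite B" "card B = n" "alg_indep k B"
      "\<forall>x\<in>L. algebraic_over (gen_field (k \<union> B)) x"
    using tr unfolding has_trdeg_def L_def I_def by blast
  have md: "mindep k B" by (rule alg_indep_mindep[OF B(2) k B(4)])
  have a0: "a \<noteq> 0" using ns sf_0[OF k] by force
  define S where "S = s ` I"
  have t_alg: "t i \<in> cl k S" if i: "i \<in> I" for i
  proof -
    define G where "G = gen_field (k \<union> S)"
    have G: "is_subfield G" unfolding G_def by (rule gen_field_sf)
    have kG: "k \<subseteq> G" and sG: "s i \<in> G" using gen_field_incl[of "k \<union> S"] i unfolding G_def S_def by auto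
    define c where "c = ((s i)^2 - b i) / a"
    have cG: "c \<in> G" unfolding c_def
      using bk i kG ak by (intro sf_divide sf_diff sf_power G sG) (auto simp: I_def)
    have "algebraic_over G (t i)" unfolding algebraic_over_def
    proof (intro exI conjI allI)
      show "[:- c, 0, 1:] \<noteq> 0" by simp
      fix j show "coeff [:- c, 0, 1:] j \<in> G"
        using cG sf_0[OF G] sf_1[OF G] sf_uminus[OF G cG]
        by (auto simp: coeff_pCons split: nat.splits)
    next
      have "a * (t i)^2 = (s i)^2 - b i" using eq i unfolding I_def by (simp add: algebra_simps)
      then have "(t i)^2 = c" unfolding c_def using a0 by (simp add: field_simps)
      then show "poly [:- c, 0, 1:] (t i) = 0" by (simp add: power2_eq_square)
    qed
    then show ?thesis unfolding cl_def G_def by simp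
  qed
  have L_cl_S: "L \<subseteq> cl k S" unfolding L_def
  proof (rule gen_field_least[OF cl_sf])
    have "k \<subseteq> cl k S" by (rule cl_incl_F)
    moreover have "s ` I \<subseteq> cl k S" using cl_incl[of S k] unfolding S_def .
    moreover have "t ` I \<subseteq> cl k S" using t_alg by auto
    ultimately show "k \<union> s ` I \<union> t ` I \<subseteq> cl k S" by simp
  qed
  have BS: "B \<subseteq> cl k S" using B(1) L_cl_S by blast
  have finI: "finite I" unfolding I_def by simp
  have "card S \<le> card B" unfolding S_def using card_image_le[OF finI, of s] cI B(3) by simp
  then have mdS: "mindep k S" by (intro mindep_of_card[OF _ B(2) md BS]) (simp_all add: S_def finI)
  have s_notin: "s i \<notin> k" if "i \<in> I" for i
  proof
    assume "s i \<in> k"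
    then have "s i \<in> cl k (S - {s i})" using cl_incl_F by blast
    then show False using mdS that unfolding mindep_def S_def by blast
  qed
  have "\<forall>i\<in>I. \<exists>p\<in>k. \<exists>q\<in>k. p^2 - a * q^2 = b i"
    using quat_to_point[OF k ak ns] Q unfolding I_def by blast
  then obtain P Qp where PQ: "\<And>i. i \<in> I \<Longrightarrow> P i \<in> k \<and> Qp i \<in> k \<and> (P i)^2 - a * (Qp i)^2 = b i"
    by metis
  define u where "u i = (t i - Qp i) / (s i - P i)" for i
  have par: "1 - a * (u i)^2 \<noteq> 0 \<and> s i = (2 * a * Qp i * u i - P i - a * P i * (u i)^2) / (1 - a * (u i)^2)
      \<and> t i = Qp i + u i * (s i - P i)" if i: "i \<in> I" for i
  proof -
    have sp: "s i \<noteq> P i" using s_notin[OF i] PQ[OF i] by auto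
    have e1: "(s i)^2 - a * (t i)^2 = b i" using eq i unfolding I_def by blast
    have e2: "(P i)^2 - a * (Qp i)^2 = b i" using PQ[OF i] by blast
    have b0: "b i \<noteq> 0" using bk i unfolding I_def by blast
    show ?thesis unfolding u_def using conic_param[OF two sp e1 e2 b0] by blast
  qed
  define U where "U = u ` I"
  have UL: "U \<subseteq> L"
  proof
    fix x assume "x \<in> U"
    then obtain i where i: "i \<in> I" "x = u i" unfolding U_def by auto
    have "s i \<in> L" "t i \<in> L" "P i \<in> L" "Qp i \<in> L" using sL tL kL PQ i by auto
    then show "x \<in> L" unfolding i(2) u_def by (intro sf_divide sf_diff Lsf)
  qed
  have L_eq: "L = gen_field (k \<union> U)"
  proof
    show "gen_field (k \<union> U) \<subseteq> L" by (rule gen_field_least[OF Lsf]) (use kL UL in blast)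
    define G where "G = gen_field (k \<union> U)"
    have G: "is_subfield G" unfolding G_def by (rule gen_field_sf)
    have kG: "k \<subseteq> G" and UG: "U \<subseteq> G" using gen_field_incl[of "k \<union> U"] unfolding G_def by simp_all
    have sG: "s i \<in> G" if i: "i \<in> I" for i
    proof -
      have "u i \<in> G" using UG i unfolding U_def by auto
      then have "(2 * a * Qp i * u i - P i - a * P i * (u i)^2) / (1 - a * (u i)^2) \<in> G"
        using PQ[OF i] kG ak by (intro param_in G) auto
      then show ?thesis using par[OF i] by simp
    qed
    have tG: "t i \<in> G" if i: "i \<in> I" for i
    proof -
      have "u i \<in> G" using UG i unfolding U_def by auto
      then have "Qp i + u i * (s i - P i) \<in> G"
        using PQ[OF i] kG sG[OF i] by (intro sf_add sf_mult sf_diff G) auto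
      then show ?thesis using par[OF i] by simp
    qed
    show "L \<subseteq> G" unfolding L_def
      by (rule gen_field_least[OF G]) (use kG sG tG in blast)
  qed
  have BU: "B \<subseteq> cl k U" using B(1) L_eq cl_gen by blast
  have finU: "finite U" unfolding U_def using finI by simp
  have "card U \<le> card B" unfolding U_def using card_image_le[OF finI, of u] cI B(3) by simp
  then have "mindep k U" by (intro mindep_of_card[OF finU B(2) md BU])
  then have "alg_indep k U" by (rule mindep_alg_indep[OF finU k])
  then have "k_rational k L" unfolding k_rational_def using finU L_eq by blast
  then show ?thesis unfolding L_def I_def .
qed

lemma step_S:
  assumes "k_rational k (L::'K::field set)"
  shows "stably_k_rational k L"
proof -
  obtain U where U: "finite U" "alg_indep k U" "L = gen_field (k \<union> U)"
    using assms unfolding k_rational_def by blast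
  have "gen_field (bconst ` L \<union> {}) = gen_field (bconst ` k \<union> bconst ` U)"
    unfolding U(3) bconst_gen_field image_Un by (simp add: gen_field_idem gen_field_sf)
  then have "k_rational (bconst ` k) (gen_field (bconst ` L \<union> {}))"
    unfolding k_rational_def using U(1) bconst_alg_indep[OF U(2)] by blast
  then show ?thesis unfolding stably_k_rational_def using alg_indep_empty by blast
qed

lemma step_U:
  assumes "stably_k_rational k (L::'K::field set)"
  shows "k_unirational k L"
proof -
  obtain Y where Y: "finite Y" "alg_indep (bconst ` L) Y" "k_rational (bconst ` k) (gen_field (bconst ` L \<union> Y))"
    using assms unfolding stably_k_rational_def by blast
  have "inj_on bconst L" by (rule inj_on_subset[OF bconst_inj]) simp
  moreover have "bconst ` L \<subseteq> gen_field (bconst ` L \<union> Y)" using gen_field_incl[of "bconst ` L \<union> Y"] by simp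
  ultimately show ?thesis unfolding k_unirational_def using Y(3)
    by (intro exI[of _ "gen_field (bconst ` L \<union> Y)"] exI[of _ bconst]) (auto simp: bconst_add bconst_mult)
qed

lemma step_Q:
  fixes k :: "'K::field set" and a :: 'K and n :: nat and b s t :: "nat \<Rightarrow> 'K"
  assumes k: "is_subfield k" and inf: "infinite k" and two: "(2::'K) \<noteq> 0"
    and ak: "a \<in> k" and ns: "\<not> (\<exists>c\<in>k. a = c^2)"
    and bk: "\<forall>i\<in>{1..n}. b i \<in> k \<and> b i \<noteq> 0"
    and eq: "\<forall>i\<in>{1..n}. (s i)^2 - a * (t i)^2 = b i"
    and U: "k_unirational k (gen_field (k \<union> s ` {1..n} \<union> t ` {1..n}))"
  shows "\<forall>i\<in>{1..n}. quat_class_zero k a (b i)"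
proof
  fix i assume i: "i \<in> {1..n}"
  define L where "L = gen_field (k \<union> s ` {1..n} \<union> t ` {1..n})"
  have Lsf: "is_subfield L" unfolding L_def by (rule gen_field_sf)
  have kL: "k \<subseteq> L" and sL: "s i \<in> L" and tL: "t i \<in> L"
    using gen_field_incl[of "k \<union> s ` {1..n} \<union> t ` {1..n}"] i unfolding L_def by auto
  obtain R f where Rf: "k_rational (bconst ` k) R" "inj_on f L" "f ` L \<subseteq> R"
      "\<forall>x\<in>L. \<forall>y\<in>L. f (x + y) = f x + f y \<and> f (x * y) = f x * f y" "\<forall>c\<in>k. f c = bconst c"
    using U unfolding k_unirational_def L_def by blast
  obtain B where B: "finite B" "alg_indep (bconst ` k) B" "R = gen_field (bconst ` k \<union> B)"
    using Rf(1) unfolding k_rational_def by blast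
  have fsub: "f (x - y) = f x - f y" if "x \<in> L" "y \<in> L" for x y
  proof -
    have xy: "x - y \<in> L" using sf_diff[OF Lsf that] .
    have "f x = f ((x - y) + y)" by simp
    also have "\<dots> = f (x - y) + f y" using Rf(4) xy that(2) by blast
    finally show ?thesis by simp
  qed
  have fm: "f (x * y) = f x * f y" if "x \<in> L" "y \<in> L" for x y using Rf(4) that by blast
  have aL: "a \<in> L" using ak kL by blast
  have bL: "b i \<in> k" "b i \<noteq> 0" using bk i by auto
  have sq: "x * x \<in> L" if "x \<in> L" for x using sf_mult[OF Lsf that that] .
  have "f (s i * s i - a * (t i * t i)) = f (b i)" using eq i by (simp add: power2_eq_square)
  then have "f (s i) * f (s i) - f a * (f (t i) * f (t i)) = f (b i)"
    using fsub[OF sq[OF sL] sf_mult[OF Lsf aL sq[OF tL]]] fm[OF sL sL] fm[OF tL tL] fm[OF aL sq[OF tL]]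
    by simp
  then have e: "(f (s i))^2 - bconst a * (f (t i))^2 = bconst (b i)"
    using Rf(5) ak bL by (simp add: power2_eq_square)
  have k0: "is_subfield (bconst ` k)" by (rule bconst_sf[OF k])
  have inf0: "infinite (bconst ` k)"
    using inf finite_imageD[of bconst k] inj_on_subset[OF bconst_inj] by blast
  have "f (s i) \<in> gen_field (bconst ` k \<union> B)" "f (t i) \<in> gen_field (bconst ` k \<union> B)"
    using Rf(3) sL tL B(3) by auto
  then obtain x y where xy: "x \<in> bconst ` k" "y \<in> bconst ` k" "x^2 - bconst a * y^2 = bconst (b i)"
    using specN[OF B(1) k0 inf0 B(2) _ _ _ _ e] ak bL by blast
  then obtain p q where pq: "p \<in> k" "q \<in> k" "x = bconst p" "y = bconst q" by blast
  have "bconst (p^2 - a * q^2) = bconst (b i)"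
    using xy(3) unfolding pq by (simp add: bconst_diff bconst_mult bconst_power)
  then have "p^2 - a * q^2 = b i" by (simp add: bconst_eq_iff)
  moreover have "a \<noteq> 0" using ns sf_0[OF k] by force
  ultimately show "quat_class_zero k a (b i)"
    using point_to_quat[OF k two _ ak bL(2) pq(1,2)] by blast
qed

theorem theorem2p7:
  fixes k :: "'K::field set" and a :: 'K and n :: nat and b s t :: "nat \<Rightarrow> 'K"
  assumes "is_subfield k" and "infinite k" and "(2::'K) \<noteq> 0"
    and "a \<in> k" and "\<not> (\<exists>c\<in>k. a = c^2)"
    and "\<forall>i\<in>{1..n}. b i \<in> k \<and> b i \<noteq> 0"
    and "\<forall>i\<in>{1..n}. (s i)^2 - a * (t i)^2 = b i"
    and "has_trdeg k (gen_field (k \<union> s ` {1..n} \<union> t ` {1..n})) n"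
  shows "(k_rational k (gen_field (k \<union> s ` {1..n} \<union> t ` {1..n}))
            \<longleftrightarrow> (\<forall>i\<in>{1..n}. quat_class_zero k a (b i))) \<and>
         (stably_k_rational k (gen_field (k \<union> s ` {1..n} \<union> t ` {1..n}))
            \<longleftrightarrow> (\<forall>i\<in>{1..n}. quat_class_zero k a (b i))) \<and>
         (k_unirational k (gen_field (k \<union> s ` {1..n} \<union> t ` {1..n}))
            \<longleftrightarrow> (\<forall>i\<in>{1..n}. quat_class_zero k a (b i)))"
proof -
  let ?L = "gen_field (k \<union> s ` {1..n} \<union> t ` {1..n})"
  let ?Q = "\<forall>i\<in>{1..n}. quat_class_zero k a (b i)"
  have R: "?Q \<Longrightarrow> k_rational k ?L" using step_R[OF assms(1,3,4,5,6,7,8)] by blast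
  have S: "k_rational k ?L \<Longrightarrow> stably_k_rational k ?L" by (rule step_S)
  have U: "stably_k_rational k ?L \<Longrightarrow> k_unirational k ?L" by (rule step_U)
  have Q: "k_unirational k ?L \<Longrightarrow> ?Q" using step_Q[OF assms(1-7)] by blast
  show ?thesis using R S U Q by blast
qed

end
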